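(* Let $f:\mathbb{R}^n\to\mathbb{R}^n$ be smooth, $N\ge3$, and for each $i$ let $A_{i+1,i},A_{i-1,i}$ be real $n\times n$ matrices (indices modulo $N$; $A_{j,i}$ is the coupling from node $j$ to node $i$). Consider the bidirectional ring network $$\dot{x}_i=f(x_i)+A_{i+1,i}(x_{i+1}-x_i)+A_{i-1,i}(x_{i-1}-x_i),\qquad i=1,\dots,N.$$ Suppose there is $\lambda>0$ with $(J_f(z))_s\preceq-\lambda I$ for all $z\in\mathbb{R}^n$, and that for each $i=1,\dots,N$ at least one of the following holds: (1) $(A_{i+1,i})_s\succ0$ and $(A_{i,i+1})_s-\tfrac14(A_{i,i+1}+A_{i+1,i}^T)\,(A_{i+1,i})_s^{-1}\,(A_{i+1,i}+A_{i,i+1}^T)\succeq0$; (2) $(A_{i,i+1})_s\succ0$ and $(A_{i+1,i})_s-\tfrac14(A_{i+1,i}+A_{i,i+1}^T)\,(A_{i,i+1})_s^{-1}\,(A_{i,i+1}+A_{i+1,i}^T)\succeq0$. Then for every initial condition, $\|x_i(t)-x_j(t)\|\to0$ exponentially as $t\to\infty$ for all $i,j$ (complete synchronization).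
   Context: $J_f(z)=\frac{\partial f}{\partial z}(z)$ is the Jacobian of $f$. For a square matrix $M$, $M_s=\tfrac12(M+M^T)$ and $M_s^{-1}$ denotes $(M_s)^{-1}$. For symmetric matrices, $\succ0$ ($\succeq0$) means positive definite (semidefinite), and $M\preceq N$ means $N-M\succeq0$. *)

theory Defs
  imports "HOL-Analysis.Analysis"
begin

inductive_set iter_derivs :: "('a::real_normed_vector \<Rightarrow> 'b::real_normed_vector) \<Rightarrow> ('a \<Rightarrow> 'b) set"
  for f where
  base: "f \<in> iter_derivs f"
| step: "g \<in> iter_derivs f \<Longrightarrow> (\<lambda>x. frechet_derivative g (at x) v) \<in> iter_derivs f"

definition smooth :: "('a::real_normed_vector \<Rightarrow> 'b::real_normed_vector) \<Rightarrow> bool" where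
  "smooth f \<longleftrightarrow> (\<forall>g \<in> iter_derivs f. \<forall>x. g differentiable (at x))"

definition jacobian :: "(real^'n \<Rightarrow> real^'n) \<Rightarrow> real^'n \<Rightarrow> real^'n^'n" where
  "jacobian f z = matrix (frechet_derivative f (at z))"

definition sym_part :: "real^'n^'n \<Rightarrow> real^'n^'n" where
  "sym_part M = (1/2) *\<^sub>R (M + transpose M)"

text \<open>Positive semidefinite / definite (used only on symmetric matrices).\<close>
definition psd :: "real^'n^'n \<Rightarrow> bool" where
  "psd M \<longleftrightarrow> (\<forall>v. 0 \<le> v \<bullet> (M *v v))"

definition pd :: "real^'n^'n \<Rightarrow> bool" where
  "pd M \<longleftrightarrow> (\<forall>v. v \<noteq> 0 \<longrightarrow> 0 < v \<bullet> (M *v v))"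

end

theory Submission imports Defs begin

lemma quad_transpose: "(v::real^'n) \<bullet> (transpose M *v v) = v \<bullet> (M *v v)"
  by (simp add: dot_lmul_matrix[symmetric] inner_commute)

lemma scaleR_mv: "((c::real) *\<^sub>R M) *v v = c *\<^sub>R (M *v (v::real^'n))"
  by (simp add: vec_eq_iff matrix_vector_mult_def sum_distrib_left mult.assoc)

lemma quad_sym: "(v::real^'n) \<bullet> (sym_part M *v v) = v \<bullet> (M *v v)"
  unfolding sym_part_def
  by (simp add: scaleR_mv matrix_vector_mult_add_rdistrib inner_add_right)
    (metis dot_lmul_matrix inner_commute)

lemma pd_inv:
  fixes P :: "real^'n^'n"
  assumes "pd P"
  shows "P ** matrix_inv P = mat 1"
proof -
  have "\<forall>x. P *v x = 0 \<longrightarrow> x = 0" using assms unfolding pd_def by force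
  then have "invertible P" using matrix_left_invertible_ker invertible_left_inverse by blast
  then show ?thesis unfolding invertible_def matrix_inv_def by (rule someI2_ex) auto
qed

lemma mv_scaleR_vec: "M *v ((c::real) *\<^sub>R v) = c *\<^sub>R (M *v (v::real^'n))"
  by (simp add: vec_eq_iff matrix_vector_mult_def sum_distrib_left algebra_simps)

lemma schur:
  fixes P Q K R :: "real^'n^'n"
  assumes symP: "transpose P = P" and PR: "P ** R = mat 1"
    and psdP: "pd P"
    and S: "psd (Q - (1/4) *\<^sub>R (transpose K ** R ** K))"
  shows "0 \<le> u \<bullet> (P *v u) - u \<bullet> (K *v w) + w \<bullet> (Q *v w)"
proof -
  define y where "y = K *v w"
  define r where "r = R *v y"
  define z where "z = u - (1/2) *\<^sub>R r"
  have Pr: "P *v r = y" unfolding r_def using PR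
    by (metis matrix_vector_mul_assoc matrix_vector_mul_lid)
  have rPu: "r \<bullet> (P *v u) = u \<bullet> y"
    by (metis Pr dot_lmul_matrix inner_commute symP vector_transpose_matrix)
  have z0: "0 \<le> z \<bullet> (P *v z)"
    using psdP unfolding pd_def by (cases "z = 0") (auto intro: less_imp_le)
  have zz: "z \<bullet> (P *v z) = u \<bullet> (P *v u) - u \<bullet> y + (1/4) * (y \<bullet> r)"
    unfolding z_def
    by (simp add: matrix_vector_mult_diff_distrib mv_scaleR_vec Pr inner_diff_left inner_diff_right rPu
        inner_commute[of r y] algebra_simps)
  have Sw: "0 \<le> w \<bullet> (Q *v w) - (1/4) * (y \<bullet> r)"
  proof -
    have "0 \<le> w \<bullet> ((Q - (1/4) *\<^sub>R (transpose K ** R ** K)) *v w)"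
      using S unfolding psd_def by blast
    also have "... = w \<bullet> (Q *v w) - (1/4) * (w \<bullet> (transpose K *v r))"
      by (simp add: matrix_vector_mult_diff_rdistrib scaleR_mv r_def y_def matrix_vector_mul_assoc[symmetric]
          inner_diff_right)
    also have "w \<bullet> (transpose K *v r) = y \<bullet> r"
      by (metis dot_lmul_matrix inner_commute transpose_matrix_vector y_def)
    finally show ?thesis .
  qed
  show ?thesis using z0 zz Sw unfolding y_def by linarith
qed

lemma transpose_add': "transpose (M + N) = transpose M + transpose (N::real^'n^'n)"
  by (simp add: transpose_def vec_eq_iff)

lemma sym_sym: "transpose (sym_part M) = sym_part (M::real^'n^'n)"
  unfolding sym_part_def by (simp add: transpose_scalar transpose_add' add.commute)

lemma quadT: "u \<bullet> (transpose M *v w) = w \<bullet> (M *v (u::real^'n))"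
  by (metis dot_lmul_matrix inner_commute transpose_matrix_vector)

lemma quadV: "u \<bullet> (w v* M) = w \<bullet> (M *v (u::real^'n))"
  by (metis dot_lmul_matrix inner_commute)

lemma edge:
  fixes A1 A2 :: "real^'n^'n"
  assumes "(pd (sym_part A1) \<and> psd (sym_part A2 - (1/4) *\<^sub>R ((A2 + transpose A1) ** matrix_inv (sym_part A1) ** (A1 + transpose A2))))
     \<or> (pd (sym_part A2) \<and> psd (sym_part A1 - (1/4) *\<^sub>R ((A1 + transpose A2) ** matrix_inv (sym_part A2) ** (A2 + transpose A1))))"
  shows "0 \<le> u \<bullet> (A1 *v (u - w)) + w \<bullet> (A2 *v (w - u))"
  using assms
proof
  assume h: "pd (sym_part A1) \<and> psd (sym_part A2 - (1/4) *\<^sub>R ((A2 + transpose A1) ** matrix_inv (sym_part A1) ** (A1 + transpose A2)))"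
  have "0 \<le> u \<bullet> (sym_part A1 *v u) - u \<bullet> ((A1 + transpose A2) *v w) + w \<bullet> (sym_part A2 *v w)"
    apply (rule schur[of _ "matrix_inv (sym_part A1)"])
    using h by (auto simp: sym_sym pd_inv transpose_add' add.commute)
  then show ?thesis
    by (simp add: quad_sym matrix_vector_mult_add_rdistrib matrix_vector_mult_diff_distrib inner_add_right
        inner_diff_right quadT quadV)
next
  assume h: "pd (sym_part A2) \<and> psd (sym_part A1 - (1/4) *\<^sub>R ((A1 + transpose A2) ** matrix_inv (sym_part A2) ** (A2 + transpose A1)))"
  have "0 \<le> w \<bullet> (sym_part A2 *v w) - w \<bullet> ((A2 + transpose A1) *v u) + u \<bullet> (sym_part A1 *v u)"
    apply (rule schur[of _ "matrix_inv (sym_part A2)"])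
    using h by (auto simp: sym_sym pd_inv transpose_add' add.commute)
  then show ?thesis
    by (simp add: quad_sym matrix_vector_mult_add_rdistrib matrix_vector_mult_diff_distrib inner_add_right
        inner_diff_right quadT quadV)
qed

lemma neg_mv: "(- M) *v v = - (M *v (v::real^'n))"
  by (simp add: vec_eq_iff matrix_vector_mult_def sum_negf)

lemma contraction:
  fixes f :: "real^'n \<Rightarrow> real^'n"
  assumes sm: "smooth f"
    and contr: "\<And>z. psd (- (lam *\<^sub>R mat 1) - sym_part (jacobian f z))"
  shows "(a - b) \<bullet> (f a - f b) \<le> - lam * ((a - b) \<bullet> (a - b))"
proof -
  define d where "d = a - b"
  have fd: "\<And>z. (f has_derivative (\<lambda>h. jacobian f z *v h)) (at z)"
  proof -
    fix z
    have "f differentiable (at z)" using sm unfolding smooth_def by (blast intro: iter_derivs.base)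
    then show "(f has_derivative (\<lambda>h. jacobian f z *v h)) (at z)"
      by (simp add: frechet_derivative_works has_derivative_linear Defs.jacobian_def)
  qed
  have Jq: "d \<bullet> (jacobian f z *v d) \<le> - lam * (d \<bullet> d)" for z
  proof -
    have "0 \<le> d \<bullet> ((- (lam *\<^sub>R mat 1) - sym_part (jacobian f z)) *v d)"
      using contr unfolding psd_def by blast
    also have "... = - lam * (d \<bullet> d) - d \<bullet> (jacobian f z *v d)"
      by (simp add: matrix_vector_mult_diff_rdistrib scaleR_mv inner_diff_right quad_sym
          neg_mv)
    finally show ?thesis by linarith
  qed
  define g where "g s = d \<bullet> f (b + s *\<^sub>R d) + lam * (d \<bullet> d) * s" for s
  have gd: "(g has_derivative (\<lambda>h. d \<bullet> (jacobian f (b + s *\<^sub>R d) *v (h *\<^sub>R d)) + lam * (d \<bullet> d) * h)) (at s within {0..1})" for s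
    unfolding g_def
    by (auto intro!: derivative_eq_intros has_derivative_compose[OF _ fd])
  obtain s where "g 1 - g 0 = d \<bullet> (jacobian f (b + s *\<^sub>R d) *v (1 *\<^sub>R d)) + lam * (d \<bullet> d) * 1"
    using mvt_very_simple[of 0 1 g, OF _ gd] by auto
  then have "g 1 - g 0 \<le> 0" using Jq[of "b + s *\<^sub>R d"] by simp
  then show ?thesis unfolding g_def d_def by (simp add: inner_diff_right)
qed

theorem theorem3p10:
  fixes f :: "real^'n \<Rightarrow> real^'n"
    and N :: nat
    and A :: "nat \<Rightarrow> nat \<Rightarrow> real^'n^'n"
    and lam :: real
    and x :: "real \<Rightarrow> nat \<Rightarrow> real^'n"
  assumes smooth_f: "smooth f"
    and N3: "N \<ge> 3"
    and lam_pos: "lam > 0"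
    and contr: "\<And>z. psd (- (lam *\<^sub>R mat 1) - sym_part (jacobian f z))"
    and coupling: "\<And>i. i < N \<Longrightarrow>
       (pd (sym_part (A ((i+1) mod N) i)) \<and>
        psd (sym_part (A i ((i+1) mod N))
             - (1/4) *\<^sub>R ((A i ((i+1) mod N) + transpose (A ((i+1) mod N) i))
                          ** matrix_inv (sym_part (A ((i+1) mod N) i))
                          ** (A ((i+1) mod N) i + transpose (A i ((i+1) mod N))))))
     \<or> (pd (sym_part (A i ((i+1) mod N))) \<and>
        psd (sym_part (A ((i+1) mod N) i)
             - (1/4) *\<^sub>R ((A ((i+1) mod N) i + transpose (A i ((i+1) mod N)))
                          ** matrix_inv (sym_part (A i ((i+1) mod N)))
                          ** (A i ((i+1) mod N) + transpose (A ((i+1) mod N) i)))))"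
    and solution: "\<And>t i. t \<ge> 0 \<Longrightarrow> i < N \<Longrightarrow>
       ((\<lambda>s. x s i) has_vector_derivative
          (f (x t i) + A ((i+1) mod N) i *v (x t ((i+1) mod N) - x t i)
                     + A ((i+N-1) mod N) i *v (x t ((i+N-1) mod N) - x t i)))
       (at t within {0..})"
  shows "\<exists>C c. c > 0 \<and> (\<forall>t\<ge>0. \<forall>i<N. \<forall>j<N. norm (x t i - x t j) \<le> C * exp (- c * t))"
proof -
  have N0: "N > 0" using N3 by simp
  define nx where "nx i = (i+1) mod N" for i
  define pv where "pv i = (i+N-1) mod N" for i
  define m where "m t = (1/real N) *\<^sub>R (\<Sum>j<N. x t j)" for t
  define e where "e t i = x t i - m t" for t i
  define D where "D t i = f (x t i) + A ((i+1) mod N) i *v (x t ((i+1) mod N) - x t i)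
                     + A ((i+N-1) mod N) i *v (x t ((i+N-1) mod N) - x t i)" for t i
  define md where "md t = (1/real N) *\<^sub>R (\<Sum>j<N. D t j)" for t
  define V where "V t = (\<Sum>i<N. e t i \<bullet> e t i)" for t
  define V' where "V' t = (\<Sum>i<N. 2 * (e t i \<bullet> (D t i - md t)))" for t
  have esum: "(\<Sum>i<N. e t i) = 0" for t
    using N0 unfolding e_def m_def by (simp add: sum_subtractf sum_constant_scaleR del: sum_constant)
  have xd: "((\<lambda>s. x s i) has_derivative (\<lambda>h. h *\<^sub>R D t i)) (at t within {0..})" if "t \<ge> 0" "i < N" for t i
    using solution[OF that] unfolding D_def has_vector_derivative_def .
  have Vd: "(V has_derivative (\<lambda>h. h * V' t)) (at t within {0..})" if t0: "t \<ge> 0" for t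
  proof -
    have md: "(m has_derivative (\<lambda>h. h *\<^sub>R md t)) (at t within {0..})"
      unfolding m_def md_def
      by (auto intro!: derivative_eq_intros has_derivative_sum xd[OF t0] simp: scaleR_sum_right)
    have ed: "((\<lambda>s. e s i) has_derivative (\<lambda>h. h *\<^sub>R (D t i - md t))) (at t within {0..})" if "i < N" for i
      unfolding e_def using xd[OF t0 that] md
      by (auto intro!: derivative_eq_intros simp: scaleR_diff_right)
    show ?thesis unfolding V_def V'_def
      by (auto intro!: derivative_eq_intros has_derivative_sum ed simp: sum_distrib_left inner_commute algebra_simps)
  qed
  have V'eq: "V' t = 2 * (\<Sum>i<N. e t i \<bullet> D t i)" for t
  proof -
    have "(\<Sum>i<N. e t i \<bullet> md t) = 0"
      using esum[of t] by (simp add: inner_sum_left[symmetric])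
    then show ?thesis unfolding V'_def
      by (simp add: inner_diff_right sum_subtractf sum_distrib_left[symmetric])
  qed
  have pvnx: "pv (nx j) = j" if "j < N" for j
    using that N0 unfolding nx_def pv_def by (cases "Suc j = N") (auto simp: mod_Suc)
  have nxpv: "nx (pv a) = a" if "a < N" for a
  proof (cases a)
    case 0 then show ?thesis using N0 by (simp add: nx_def pv_def)
  next
    case (Suc k)
    then have "pv a = k" using that by (simp add: pv_def)
    then show ?thesis using Suc that by (simp add: nx_def)
  qed
  have bij: "bij_betw nx {..<N} {..<N}"
    by (rule bij_betw_byWitness[where f'=pv]) (auto simp: pvnx nxpv, auto simp: nx_def pv_def N0)
  have key: "(\<Sum>i<N. e t i \<bullet> D t i) \<le> - lam * V t" for t
  proof -
    have f1: "(\<Sum>i<N. e t i \<bullet> f (x t i)) \<le> - lam * V t"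
    proof -
      have "(\<Sum>i<N. e t i \<bullet> f (m t)) = 0"
        using esum[of t] by (simp add: inner_sum_left[symmetric])
      then have "(\<Sum>i<N. e t i \<bullet> f (x t i)) = (\<Sum>i<N. e t i \<bullet> (f (x t i) - f (m t)))"
        by (simp add: inner_diff_right sum_subtractf)
      also have "... \<le> (\<Sum>i<N. - lam * (e t i \<bullet> e t i))"
        by (rule sum_mono) (unfold e_def, rule contraction[OF smooth_f contr])
      finally show ?thesis by (simp add: V_def sum_distrib_left)
    qed
    define h where "h i = e t i \<bullet> (A (pv i) i *v (e t (pv i) - e t i))" for i
    have xe: "x t k - x t l = e t k - e t l" for k l unfolding e_def by simp
    have "(\<Sum>i<N. h i) = (\<Sum>j<N. h (nx j))"
      using sum.reindex_bij_betw[OF bij, of h] by simp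
    also have "... = (\<Sum>j<N. e t (nx j) \<bullet> (A j (nx j) *v (e t j - e t (nx j))))"
      by (rule sum.cong) (simp_all add: h_def pvnx)
    finally have hre: "(\<Sum>i<N. h i) = ..." .
    have c1: "(\<Sum>i<N. e t i \<bullet> (A (nx i) i *v (e t (nx i) - e t i)) + h i) \<le> 0"
    proof -
      have "(\<Sum>i<N. e t i \<bullet> (A (nx i) i *v (e t (nx i) - e t i)) + h i)
          = (\<Sum>j<N. - (e t j \<bullet> (A (nx j) j *v (e t j - e t (nx j))) + e t (nx j) \<bullet> (A j (nx j) *v (e t (nx j) - e t j))))"
        unfolding sum.distrib hre
        by (simp add: sum_negf[symmetric] sum.distrib[symmetric] matrix_vector_mult_diff_distrib inner_diff_right
            algebra_simps)
      also have "... \<le> 0"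
      proof (rule sum_nonpos)
        fix j assume "j \<in> {..<N}"
        then have "j < N" by simp
        from edge[OF coupling[OF this], of "e t j" "e t (nx j)"]
        show "- (e t j \<bullet> (A (nx j) j *v (e t j - e t (nx j))) + e t (nx j) \<bullet> (A j (nx j) *v (e t (nx j) - e t j))) \<le> 0"
          by (simp add: nx_def)
      qed
      finally show ?thesis .
    qed
    have "(\<Sum>i<N. e t i \<bullet> D t i) = (\<Sum>i<N. e t i \<bullet> f (x t i)) + (\<Sum>i<N. e t i \<bullet> (A (nx i) i *v (e t (nx i) - e t i)) + h i)"
      unfolding D_def h_def nx_def pv_def xe
      by (simp add: inner_add_right sum.distrib add.assoc)
    then show ?thesis using f1 c1 by linarith
  qed
  have Vbound: "V t \<le> V 0 * exp (- (2*lam) * t)" if t0: "t \<ge> 0" for t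
  proof -
    define Wf where "Wf s = V s * exp (2*lam * s)" for s
    have Wd: "(Wf has_derivative (\<lambda>h. h * ((V' s + 2*lam*V s) * exp (2*lam * s)))) (at s within {0..t})"
      if "0 \<le> s" "s \<le> t" for s
      unfolding Wf_def
      using has_derivative_subset[OF Vd[of s]] that
      by (auto intro!: derivative_eq_intros simp: algebra_simps)
    obtain s where s: "s \<in> {0..t}" "Wf t - Wf 0 = t * ((V' s + 2*lam*V s) * exp (2*lam * s))"
      using mvt_very_simple[of 0 t Wf, OF t0 Wd] by auto
    have "V' s + 2*lam*V s \<le> 0" using key[of s] V'eq[of s] by simp
    then have "(V' s + 2*lam*V s) * exp (2*lam * s) \<le> 0" by (simp add: mult_nonpos_nonneg)
    then have "t * ((V' s + 2*lam*V s) * exp (2*lam * s)) \<le> 0" using t0 by (simp add: mult_nonneg_nonpos)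
    then have "Wf t \<le> Wf 0" using s by linarith
    then have "V t * exp (2*lam*t) \<le> V 0" unfolding Wf_def by simp
    then show ?thesis by (simp add: exp_minus field_simps)
  qed
  show ?thesis
  proof (intro exI conjI allI impI)
    show "lam > 0" by (rule lam_pos)
  next
    fix t :: real and i j :: nat assume t0: "t \<ge> 0" and i: "i < N" and j: "j < N"
    have V0: "0 \<le> V s" for s unfolding V_def by (simp add: sum_nonneg)
    have en: "norm (e t k) \<le> sqrt (V t)" if "k < N" for k
    proof -
      have "e t k \<bullet> e t k \<le> V t" unfolding V_def
        by (rule member_le_sum) (use that in auto)
      then show ?thesis by (simp add: norm_eq_sqrt_inner)
    qed
    have "sqrt (V t) \<le> sqrt (V 0 * exp (- (2*lam) * t))"
      using Vbound[OF t0] by simp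
    also have "... = sqrt (V 0) * exp (- lam * t)"
    proof -
      have "exp (- (2*lam) * t) = (exp (- lam * t))^2"
        by (simp add: power2_eq_square exp_add[symmetric])
      then show ?thesis by (simp add: real_sqrt_mult)
    qed
    finally have sv: "sqrt (V t) \<le> sqrt (V 0) * exp (- lam * t)" .
    have "norm (x t i - x t j) = norm (e t i - e t j)" unfolding e_def by simp
    also have "... \<le> norm (e t i) + norm (e t j)" by (rule norm_triangle_ineq4)
    also have "... \<le> 2 * sqrt (V t)" using en[OF i] en[OF j] by simp
    also have "... \<le> 2 * sqrt (V 0) * exp (- lam * t)" using sv by simp
    finally show "norm (x t i - x t j) \<le> 2 * sqrt (V 0) * exp (- lam * t)" .
  qed
qed

end
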